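(* Let $X$ and $Y$ be $n$-dimensional compacta, $n\geq 1$. If $H^n(X)\neq 0$, then there is an $\varepsilon>0$ such that every $\varepsilon$-mapping $f:X\to Y$ satisfies $H^n(f)\neq 0$, where $H^n(f):H^n(Y)\to H^n(X)$ is the induced homomorphism.
   Context: A compactum is a compact metric space; all maps are continuous. $H^*(\cdot)$ denotes Čech cohomology with integer coefficients. A map $f:X\to Y$ from a metric space is an $\varepsilon$-mapping if $\operatorname{diam} f^{-1}(y)<\varepsilon$ for every $y\in f(X)$. *)

theory Defs
  imports "HOL-Analysis.Analysis"
begin

text \<open>Finite open covers of a space X, indexed by a finite set I of naturals.
  (For compacta, Cech cohomology may be computed from finite open covers.)\<close>
definition fin_open_cover :: "'a::metric_space set \<Rightarrow> nat set \<Rightarrow> (nat \<Rightarrow> 'a set) \<Rightarrow> bool" where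
  "fin_open_cover X I U \<longleftrightarrow> finite I \<and> (\<forall>i\<in>I. openin (top_of_set X) (U i)) \<and> (\<Union>i\<in>I. U i) = X"

definition refinement_map :: "nat set \<Rightarrow> (nat \<Rightarrow> 'a set) \<Rightarrow> nat set \<Rightarrow> (nat \<Rightarrow> 'a set) \<Rightarrow> (nat \<Rightarrow> nat) \<Rightarrow> bool" where
  "refinement_map J W I U lam \<longleftrightarrow> (\<forall>j\<in>J. lam j \<in> I \<and> W j \<subseteq> U (lam j))"

definition covdim_le :: "'a::metric_space set \<Rightarrow> nat \<Rightarrow> bool" where
  "covdim_le X n \<longleftrightarrow> (\<forall>I U. fin_open_cover X I U \<longrightarrow>
     (\<exists>J W lam. fin_open_cover X J W \<and> refinement_map J W I U lam \<and>
        (\<forall>x\<in>X. card {j\<in>J. x \<in> W j} \<le> Suc n)))"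

definition covdim_eq :: "'a::metric_space set \<Rightarrow> nat \<Rightarrow> bool" where
  "covdim_eq X n \<longleftrightarrow> covdim_le X n \<and> (n = 0 \<or> \<not> covdim_le X (n - 1))"

definition nerve_simplex :: "nat set \<Rightarrow> (nat \<Rightarrow> 'a set) \<Rightarrow> nat \<Rightarrow> nat list \<Rightarrow> bool" where
  "nerve_simplex I U k \<sigma> \<longleftrightarrow> length \<sigma> = Suc k \<and> set \<sigma> \<subseteq> I \<and> (\<Inter>i\<in>set \<sigma>. U i) \<noteq> {}"

definition cobdry :: "(nat list \<Rightarrow> int) \<Rightarrow> nat list \<Rightarrow> int" where
  "cobdry c \<sigma> = (\<Sum>j<length \<sigma>. (-1) ^ j * c (take j \<sigma> @ drop (Suc j) \<sigma>))"

definition is_cocycle :: "nat set \<Rightarrow> (nat \<Rightarrow> 'a set) \<Rightarrow> nat \<Rightarrow> (nat list \<Rightarrow> int) \<Rightarrow> bool" where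
  "is_cocycle I U k c \<longleftrightarrow> (\<forall>\<sigma>. nerve_simplex I U (Suc k) \<sigma> \<longrightarrow> cobdry c \<sigma> = 0)"

definition is_coboundary :: "nat set \<Rightarrow> (nat \<Rightarrow> 'a set) \<Rightarrow> nat \<Rightarrow> (nat list \<Rightarrow> int) \<Rightarrow> bool" where
  "is_coboundary I U k c \<longleftrightarrow>
     (if k = 0 then (\<forall>\<sigma>. nerve_simplex I U 0 \<sigma> \<longrightarrow> c \<sigma> = 0)
      else (\<exists>b. \<forall>\<sigma>. nerve_simplex I U k \<sigma> \<longrightarrow> cobdry b \<sigma> = c \<sigma>))"

text \<open>c is a k-cocycle on the nerve of the finite open cover (I,U) of X whose class
  in the Cech cohomology H^k(X) (the direct limit over refinements) is nonzero,
  i.e. it does not become a coboundary after pulling back to any refinement.\<close>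
definition cech_nonzero_class :: "'a::metric_space set \<Rightarrow> nat set \<Rightarrow> (nat \<Rightarrow> 'a set) \<Rightarrow> nat \<Rightarrow> (nat list \<Rightarrow> int) \<Rightarrow> bool" where
  "cech_nonzero_class X I U k c \<longleftrightarrow> fin_open_cover X I U \<and> is_cocycle I U k c \<and>
     (\<forall>J W lam. fin_open_cover X J W \<and> refinement_map J W I U lam \<longrightarrow>
        \<not> is_coboundary J W k (\<lambda>\<sigma>. c (map lam \<sigma>)))"

definition cech_nonzero :: "'a::metric_space set \<Rightarrow> nat \<Rightarrow> bool" where
  "cech_nonzero X k \<longleftrightarrow> (\<exists>I U c. cech_nonzero_class X I U k c)"

text \<open>The induced homomorphism H^k(f): H^k(Y) \<rightarrow> H^k(X) is nonzero: some class
  represented by a cocycle c on the nerve of a finite open cover V of Y is sent to a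
  nonzero class (represented by c on the nerve of the pulled-back cover).\<close>
definition cech_induced_nonzero :: "'a::metric_space set \<Rightarrow> 'b::metric_space set \<Rightarrow> ('a \<Rightarrow> 'b) \<Rightarrow> nat \<Rightarrow> bool" where
  "cech_induced_nonzero X Y f k \<longleftrightarrow>
     (\<exists>I V c. fin_open_cover Y I V \<and> is_cocycle I V k c \<and>
        cech_nonzero_class X I (\<lambda>i. f -` V i \<inter> X) k c)"

definition eps_mapping :: "real \<Rightarrow> 'a::metric_space set \<Rightarrow> ('a \<Rightarrow> 'b) \<Rightarrow> bool" where
  "eps_mapping \<epsilon> X f \<longleftrightarrow> (\<forall>y\<in>f ` X. diameter (f -` {y} \<inter> X) < \<epsilon>)"

end

theory Submission
  imports Defs
begin

definition face :: "nat list \<Rightarrow> nat \<Rightarrow> nat list" where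
  "face s j = take j s @ drop (Suc j) s"

lemma cobdry_face: "cobdry c s = (\<Sum>j<length s. (-1) ^ j * c (face s j))"
  by (simp add: cobdry_def face_def)

lemma length_face: "j < length s \<Longrightarrow> length (face s j) = length s - 1"
  by (simp add: face_def)

lemma set_face_sub: "set (face s j) \<subseteq> set s"
  by (auto simp: face_def dest: in_set_takeD in_set_dropD)

lemma face_Cons_0: "face (x # t) 0 = t" by (simp add: face_def)
lemma face_Cons_Suc: "face (x # t) (Suc j) = x # face t j" by (simp add: face_def)

lemma face_append: "face (a @ b) k = (if k < length a then face a k @ b else a @ face b (k - length a))"
  by (auto simp: face_def Suc_diff_le)

lemma face_map: "face (map f s) j = map f (face s j)"
  by (simp add: face_def take_map drop_map)

lemma cobdry_map: "cobdry (\<lambda>s. c (map f s)) t = cobdry c (map f t)"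
  by (simp add: cobdry_face face_map)

lemma cobdry_cone: "cobdry c (v # t) = c t - cobdry (\<lambda>u. c (v # u)) t"
proof -
  have "cobdry c (v # t) = (\<Sum>j<Suc (length t). (-1) ^ j * c (face (v#t) j))"
    by (simp add: cobdry_face)
  also have "\<dots> = c t + (\<Sum>j<length t. (-1) ^ Suc j * c (face (v#t) (Suc j)))"
    by (simp only: sum.lessThan_Suc_shift) (simp add: face_Cons_0)
  also have "\<dots> = c t - cobdry (\<lambda>u. c (v # u)) t"
    by (simp add: cobdry_face face_Cons_Suc sum_negf)
  finally show ?thesis .
qed

lemma cobdry_diff: "cobdry (\<lambda>s. c s - d s) t = cobdry c t - cobdry d t"
  by (simp add: cobdry_face right_diff_distrib sum_subtractf)

lemma cobdry_add: "cobdry (\<lambda>s. c s + d s) t = cobdry c t + cobdry d t"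
  by (simp add: cobdry_face distrib_left sum.distrib)

lemma cobdry_cobdry: "cobdry (cobdry c) t = 0"
proof (induction t arbitrary: c)
  case Nil then show ?case by (simp add: cobdry_def)
next
  case (Cons v t)
  have "cobdry (cobdry c) (v # t) = cobdry c t - cobdry (\<lambda>u. cobdry c (v # u)) t"
    by (rule cobdry_cone)
  also have "(\<lambda>u. cobdry c (v # u)) = (\<lambda>u. c u - cobdry (\<lambda>w. c (v # w)) u)"
    by (simp add: cobdry_cone)
  also have "cobdry c t - cobdry \<dots> t = cobdry (cobdry (\<lambda>w. c (v # w))) t"
    by (simp add: cobdry_diff)
  also have "\<dots> = 0" by (rule Cons.IH)
  finally show ?case .
qed

fun inv :: "nat list \<Rightarrow> nat" where
  "inv [] = 0"
| "inv (x # xs) = length (filter (\<lambda>y. y < x) xs) + inv xs"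

definition Alt :: "(nat list \<Rightarrow> int) \<Rightarrow> nat list \<Rightarrow> int" where
  "Alt d s = (if distinct s then (-1) ^ inv s * d (sort s) else 0)"

definition E :: "nat \<Rightarrow> (nat list \<Rightarrow> int) \<Rightarrow> nat list \<Rightarrow> int" where
  "E x d t = (if x \<in> set t then 0 else (-1) ^ length (filter (\<lambda>y. y < x) t) * d (insort x t))"

lemma length_filter_sort: "length (filter P (sort t)) = length (filter P t)"
  by (metis mset_filter mset_sort size_mset)

lemma Alt_Cons: "Alt d (x # t) = Alt (E x d) t"
  by (auto simp: Alt_def E_def length_filter_sort power_add)

lemma Alt_diff: "Alt (\<lambda>s. c s - d s) t = Alt c t - Alt d t"
  by (simp add: Alt_def right_diff_distrib)

lemma Alt_add: "Alt (\<lambda>s. c s + d s) t = Alt c t + Alt d t"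
  by (simp add: Alt_def distrib_left)

lemma insort_mid:
  assumes "\<forall>y\<in>set a. y < x" "\<forall>y\<in>set b. x < y"
  shows "insort x (a @ b) = a @ x # b"
  using assms
proof (induction a)
  case Nil then show ?case by (cases b) auto
next
  case (Cons y a) then show ?case by auto
qed

lemma sum_split2:
  fixes f :: "nat \<Rightarrow> int"
  shows "(\<Sum>k<r + m. f k) = (\<Sum>k<r. f k) + (\<Sum>i<m. f (r + i))"
  by (induction m) auto

lemma sum_split3:
  fixes f :: "nat \<Rightarrow> int"
  shows "(\<Sum>k<r + Suc m. f k) = (\<Sum>k<r. f k) + f r + (\<Sum>i<m. f (r + Suc i))"
proof -
  have "(\<Sum>k<r + Suc m. f k) = (\<Sum>k<r. f k) + (\<Sum>i<Suc m. f (r + i))"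
    by (rule sum_split2)
  also have "(\<Sum>i<Suc m. f (r + i)) = f r + (\<Sum>i<m. f (r + Suc i))"
    by (simp only: sum.lessThan_Suc_shift) simp
  finally show ?thesis by simp
qed

lemma key_notin:
  assumes "\<forall>y\<in>set a. y < x" "\<forall>y\<in>set b. x < y" "distinct (a @ b)"
  shows "E x (cobdry d) (a @ b) + cobdry (E x d) (a @ b) = d (a @ b)"
proof -
  let ?r = "length a"
  have xn: "x \<notin> set (a @ b)" using assms by auto
  have fa: "filter (\<lambda>y. y < x) (a @ b) = a"
    using assms by (auto simp: filter_empty_conv intro!: filter_True)
  have "E x (cobdry d) (a @ b) = (-1) ^ ?r * cobdry d (a @ x # b)"
    using xn fa assms by (simp add: E_def insort_mid)
  also have "cobdry d (a @ x # b) = (\<Sum>k<?r + Suc (length b). (-1) ^ k * d (face (a @ x # b) k))"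
    by (simp add: cobdry_face)
  also have "\<dots> = (\<Sum>k<?r. (-1) ^ k * d (face a k @ x # b)) + (-1) ^ ?r * d (a @ b)
      + (\<Sum>i<length b. (-1) ^ (?r + Suc i) * d (a @ x # face b i))"
    unfolding sum_split3 by (simp add: face_append face_Cons_0 face_Cons_Suc)
  finally have eq: "E x (cobdry d) (a @ b) = (-1) ^ ?r * ((\<Sum>k<?r. (-1) ^ k * d (face a k @ x # b)) + (-1) ^ ?r * d (a @ b)
      + (\<Sum>i<length b. (-1) ^ (?r + Suc i) * d (a @ x # face b i)))" .
  have pp: "(-1::int) ^ ?r * (-1) ^ ?r = 1" by (simp flip: power_add)
  have 1: "E x (cobdry d) (a @ b) = (-1) ^ ?r * (\<Sum>k<?r. (-1) ^ k * d (face a k @ x # b))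
      + d (a @ b) + (-1) ^ ?r * (\<Sum>i<length b. (-1) ^ (?r + Suc i) * d (a @ x # face b i))"
    unfolding eq distrib_left using pp by (simp add: mult.assoc[symmetric])
  have 2: "cobdry (E x d) (a @ b) = (\<Sum>k<?r. (-1) ^ k * E x d (face a k @ b))
      + (\<Sum>i<length b. (-1) ^ (?r + i) * E x d (a @ face b i))"
    by (simp add: cobdry_face sum_split2 face_append)
  have 3: "E x d (face a k @ b) = (-1) ^ (?r - 1) * d (face a k @ x # b)" if k: "k < ?r" for k
  proof -
    have sa: "set (face a k) \<subseteq> set a" by (rule set_face_sub)
    have fb: "filter (\<lambda>y. y < x) b = []" using assms by (auto simp: filter_empty_conv)
    have "filter (\<lambda>y. y < x) (face a k) = face a k" using assms sa by (auto intro!: filter_True)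
    then have fa2: "filter (\<lambda>y. y < x) (face a k @ b) = face a k" using fb by simp
    have "x \<notin> set (face a k @ b)" using xn sa by auto
    then show ?thesis using fa2 k assms sa by (simp add: E_def length_face insort_mid subset_iff)
  qed
  have 4: "E x d (a @ face b i) = (-1) ^ ?r * d (a @ x # face b i)" for i
  proof -
    have sb: "set (face b i) \<subseteq> set b" by (rule set_face_sub)
    have fb: "filter (\<lambda>y. y < x) (face b i) = []" using assms sb by (force simp: filter_empty_conv)
    have "filter (\<lambda>y. y < x) a = a" using assms by (auto intro!: filter_True)
    then have fa2: "filter (\<lambda>y. y < x) (a @ face b i) = a" using fb by simp
    have "x \<notin> set (a @ face b i)" using xn sb by auto
    then show ?thesis using fa2 assms sb by (simp add: E_def insort_mid subset_iff)
  qed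
  have s1: "(-1) ^ ?r * (\<Sum>k<?r. (-1) ^ k * d (face a k @ x # b)) + (\<Sum>k<?r. (-1) ^ k * E x d (face a k @ b)) = (0::int)"
  proof -
    have "(\<Sum>k<?r. (-1) ^ k * E x d (face a k @ b)) = (\<Sum>k<?r. (-1) ^ k * ((-1) ^ (?r - 1) * d (face a k @ x # b)))"
      by (rule sum.cong) (auto simp: 3)
    moreover have "(-1::int) ^ ?r = - ((-1) ^ (?r - 1))" if "?r > 0"
      using that by (cases ?r) auto
    ultimately show ?thesis
      by (cases "?r = 0") (auto simp: sum_distrib_left algebra_simps sum_negf)
  qed
  have s2: "(-1) ^ ?r * (\<Sum>i<length b. (-1) ^ (?r + Suc i) * d (a @ x # face b i)) + (\<Sum>i<length b. (-1) ^ (?r + i) * E x d (a @ face b i)) = (0::int)"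
    by (simp add: 4 sum_distrib_left flip: sum.distrib)
  show ?thesis using 1 2 s1 s2 by linarith
qed

lemma key_in:
  assumes "\<forall>y\<in>set a. y < x" "\<forall>y\<in>set b. x < y" "distinct (a @ b)"
  shows "E x (cobdry d) (a @ x # b) + cobdry (E x d) (a @ x # b) = d (a @ x # b)"
proof -
  let ?r = "length a"
  have 0: "E x (cobdry d) (a @ x # b) = 0" by (simp add: E_def)
  have "cobdry (E x d) (a @ x # b) = (\<Sum>k<?r + Suc (length b). (-1) ^ k * E x d (face (a @ x # b) k))"
    by (simp add: cobdry_face)
  also have "\<dots> = (\<Sum>k<?r. (-1) ^ k * E x d (face a k @ x # b)) + (-1) ^ ?r * E x d (a @ b)
      + (\<Sum>i<length b. (-1) ^ (?r + Suc i) * E x d (a @ x # face b i))"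
    unfolding sum_split3 by (simp add: face_append face_Cons_0 face_Cons_Suc)
  also have "\<dots> = (-1) ^ ?r * E x d (a @ b)" by (simp add: E_def)
  also have "\<dots> = d (a @ x # b)"
  proof -
    have xn: "x \<notin> set (a @ b)" using assms by auto
    have fb: "filter (\<lambda>y. y < x) b = []" using assms by (force simp: filter_empty_conv)
    have "filter (\<lambda>y. y < x) a = a" using assms by (auto intro!: filter_True)
    then have "filter (\<lambda>y. y < x) (a @ b) = a" using fb by simp
    then show ?thesis using xn assms by (simp add: E_def insort_mid flip: power_add)
  qed
  finally show ?thesis using 0 by simp
qed

lemma key:
  assumes "sorted s" "distinct s"
  shows "E x (cobdry d) s + cobdry (E x d) s = d s"
proof (cases "x \<in> set s")
  case True
  then obtain a b where s: "s = a @ x # b" by (meson split_list)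
  have "\<forall>y\<in>set a. y < x" "\<forall>y\<in>set b. x < y" "distinct (a @ b)"
    using assms unfolding s by (auto simp: sorted_append order.strict_iff_order)
  then show ?thesis using key_in s by simp
next
  case False
  define a where "a = takeWhile (\<lambda>y. y < x) s"
  define b where "b = dropWhile (\<lambda>y. y < x) s"
  have s: "s = a @ b" by (simp add: a_def b_def)
  have A: "\<forall>y\<in>set a. y < x" by (auto simp: a_def dest: set_takeWhileD)
  have B: "\<forall>y\<in>set b. x < y"
  proof
    fix y assume y: "y \<in> set b"
    then obtain z zs where bz: "b = z # zs" by (cases b) auto
    have "\<not> z < x" using bz b_def by (metis dropWhile_eq_Cons_conv)
    moreover have "z \<le> y" using y bz assms(1) s by (auto simp: sorted_append)
    moreover have "y \<noteq> x" using y False s by auto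
    ultimately show "x < y" by simp
  qed
  show ?thesis using key_notin[OF A B] assms s by simp
qed

lemma Alt_cobdry: "cobdry (Alt d) t = Alt (cobdry d) t"
proof (induction t arbitrary: d)
  case Nil then show ?case by (simp add: cobdry_def Alt_def)
next
  case (Cons x t)
  have "cobdry (Alt d) (x # t) = Alt d t - cobdry (\<lambda>u. Alt d (x # u)) t"
    by (rule cobdry_cone)
  also have "(\<lambda>u. Alt d (x # u)) = Alt (E x d)" by (simp add: Alt_Cons fun_eq_iff)
  also have "cobdry (Alt (E x d)) t = Alt (cobdry (E x d)) t" by (rule Cons.IH)
  also have "Alt d t - Alt (cobdry (E x d)) t = Alt (E x (cobdry d)) t"
  proof (cases "distinct t")
    case True
    then have "E x (cobdry d) (sort t) + cobdry (E x d) (sort t) = d (sort t)"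
      using key[of "sort t" x d] by simp
    then show ?thesis using True by (simp add: Alt_def algebra_simps flip: distrib_left)
  qed (simp add: Alt_def)
  also have "\<dots> = Alt (cobdry d) (x # t)" by (simp add: Alt_Cons)
  finally show ?case .
qed

fun Hn :: "nat \<Rightarrow> (nat list \<Rightarrow> int) \<Rightarrow> nat list \<Rightarrow> int" where
  "Hn 0 d s = 0"
| "Hn (Suc k) d s = d (Min (set s) # s) - Alt (\<lambda>u. d (Min (set s) # u)) s
     - (\<Sum>j<length s. (-1) ^ j * Hn k (\<lambda>u. d (Min (set s) # u)) (face s j))"

definition H :: "(nat list \<Rightarrow> int) \<Rightarrow> nat list \<Rightarrow> int" where
  "H d s = Hn (length s - 1) d s"

lemma Hn_diff: "Hn k (\<lambda>u. c u - d u) s = Hn k c s - Hn k d s"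
proof (induction k arbitrary: c d s)
  case 0 then show ?case by simp
next
  case (Suc k)
  show ?case
    by (simp add: Alt_diff Suc.IH right_diff_distrib sum_subtractf)
qed

lemma Hn_support:
  assumes "\<forall>t. set t \<subseteq> set s \<and> length t = Suc (length s) \<longrightarrow> d t = 0"
  shows "Hn k d s = 0"
  using assms
proof (induction k arbitrary: d s)
  case 0 then show ?case by simp
next
  case (Suc k)
  show ?case
  proof (cases "s = []")
    case True then show ?thesis by (simp add: Alt_def)
  next
    case False
    let ?v = "Min (set s)"
    have v: "?v \<in> set s" using False by simp
    have 1: "d (?v # s) = 0" using Suc.prems v by auto
    have 2: "Alt (\<lambda>u. d (?v # u)) s = 0"
      using Suc.prems v by (auto simp: Alt_def)
    have 3: "Hn k (\<lambda>u. d (?v # u)) (face s j) = 0" if j: "j < length s" for j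
    proof (rule Suc.IH, intro allI impI)
      fix t assume t: "set t \<subseteq> set (face s j) \<and> length t = Suc (length (face s j))"
      then have "set (?v # t) \<subseteq> set s" using v set_face_sub[of s j] by auto
      moreover have "length (?v # t) = Suc (length s)" using t j False by (simp add: length_face)
      ultimately show "d (?v # t) = 0" using Suc.prems by blast
    qed
    show ?thesis using 1 2 3 by simp
  qed
qed

lemma homotopy:
  assumes "length s = Suc m"
  shows "c s - Alt c s = cobdry (H c) s + H (cobdry c) s"
  using assms
proof (induction m arbitrary: c s)
  case 0
  then obtain w where s: "s = [w]" by (cases s) auto
  show ?case by (simp add: s Alt_def H_def cobdry_face face_def)
next
  case (Suc m)
  let ?v = "Min (set s)"
  define cv where "cv = (\<lambda>u. c (?v # u))"
  have dcv: "(\<lambda>u. cobdry c (?v # u)) = (\<lambda>u. c u - cobdry cv u)"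
    by (simp add: cobdry_cone cv_def fun_eq_iff)
  have lf: "length (face s j) = Suc m" if "j < length s" for j
    using Suc.prems that by (simp add: length_face)
  have Hs: "H (cobdry c) s = cobdry c (?v # s) - Alt (\<lambda>u. c u - cobdry cv u) s
     - (\<Sum>j<length s. (-1) ^ j * Hn m (\<lambda>u. c u - cobdry cv u) (face s j))"
    using Suc.prems by (simp add: H_def dcv)
  have Hc: "cobdry (H c) s = (\<Sum>j<length s. (-1) ^ j * Hn m c (face s j))"
    unfolding cobdry_face H_def by (rule sum.cong) (auto simp: lf)
  have IHf: "Hn m (cobdry cv) (face s j) = cv (face s j) - Alt cv (face s j) - cobdry (H cv) (face s j)"
    if "j < length s" for j
    using Suc.IH[of "face s j" cv] lf[OF that] unfolding H_def[of "cobdry cv"] by simp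
  have S: "(\<Sum>j<length s. (-1) ^ j * Hn m (\<lambda>u. c u - cobdry cv u) (face s j))
     = (\<Sum>j<length s. (-1) ^ j * Hn m c (face s j)) - (cobdry cv s - cobdry (Alt cv) s - cobdry (cobdry (H cv)) s)"
  proof -
    have "(\<Sum>j<length s. (-1) ^ j * Hn m (\<lambda>u. c u - cobdry cv u) (face s j))
       = (\<Sum>j<length s. (-1) ^ j * Hn m c (face s j) - (-1) ^ j * (cv (face s j) - Alt cv (face s j) - cobdry (H cv) (face s j)))"
      by (rule sum.cong) (auto simp: Hn_diff IHf right_diff_distrib)
    also have "\<dots> = (\<Sum>j<length s. (-1) ^ j * Hn m c (face s j)) - (cobdry cv s - cobdry (Alt cv) s - cobdry (cobdry (H cv)) s)"
      by (simp add: sum_subtractf cobdry_face right_diff_distrib)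
    finally show ?thesis .
  qed
  have "H (cobdry c) s = c s - cobdry cv s - Alt c s + Alt (cobdry cv) s
      - cobdry (H c) s + (cobdry cv s - cobdry (Alt cv) s)"
    unfolding Hs S Hc by (simp add: Alt_diff cobdry_cone cv_def cobdry_cobdry)
  then show ?case by (simp add: Alt_cobdry)
qed

lemma homotopy_closed:
  assumes closed: "\<And>s t. S s \<Longrightarrow> t \<noteq> [] \<Longrightarrow> set t \<subseteq> set s \<Longrightarrow> S t"
    and coc: "\<And>t. S t \<Longrightarrow> length t = Suc (Suc n) \<Longrightarrow> cobdry c t = 0"
    and s: "S s" "length s = Suc n"
  shows "c s - Alt c s = cobdry (H c) s"
proof -
  have "H (cobdry c) s = 0"
    unfolding H_def
  proof (rule Hn_support, intro allI impI)
    fix t assume t: "set t \<subseteq> set s \<and> length t = Suc (length s)"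
    then have "t \<noteq> []" by auto
    then have "S t" using closed s t by blast
    then show "cobdry c t = 0" using coc t s by simp
  qed
  then show ?thesis using homotopy[OF s(2), of c] by simp
qed

lemma nerve_closed:
  assumes "set s \<subseteq> I \<and> (\<Inter>i\<in>set s. U i) \<noteq> {}" "t \<noteq> []" "set t \<subseteq> set s"
  shows "set t \<subseteq> I \<and> (\<Inter>i\<in>set t. U i) \<noteq> {}"
  using assms by blast

theorem theorem1p15:
  fixes X :: "'a::metric_space set" and Y :: "'b::metric_space set" and n :: nat
  assumes "compact X" and "compact Y" and "n \<ge> 1"
    and "covdim_eq X n" and "covdim_eq Y n"
    and "cech_nonzero X n"
  shows "\<exists>\<epsilon>>0. \<forall>f. continuous_on X f \<and> f ` X \<subseteq> Y \<and> eps_mapping \<epsilon> X f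
            \<longrightarrow> cech_induced_nonzero X Y f n"
proof -
  obtain I U c0 where cl: "cech_nonzero_class X I U n c0"
    using assms(6) by (auto simp: cech_nonzero_def)
  have cov: "fin_open_cover X I U" and coc0: "is_cocycle I U n c0"
    and nz: "\<And>J W lam. fin_open_cover X J W \<Longrightarrow> refinement_map J W I U lam \<Longrightarrow>
        \<not> is_coboundary J W n (\<lambda>\<sigma>. c0 (map lam \<sigma>))"
    using cl by (auto simp: cech_nonzero_class_def)
  have n0: "n \<noteq> 0" using assms(3) by simp
  have Ine: "I \<noteq> {}"
  proof
    assume "I = {}"
    have "refinement_map I U I U id" by (simp add: refinement_map_def)
    moreover have "is_coboundary I U n (\<lambda>\<sigma>. c0 (map id \<sigma>))"
      using n0 \<open>I = {}\<close> by (auto simp: is_coboundary_def nerve_simplex_def)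
    ultimately show False using nz cov by blast
  qed
  have "\<forall>i\<in>I. \<exists>T. open T \<and> U i = X \<inter> T"
    using cov by (auto simp: fin_open_cover_def openin_open)
  then obtain Op where Op: "\<And>i. i \<in> I \<Longrightarrow> open (Op i) \<and> U i = X \<inter> Op i" by metis
  have XU: "X = (\<Union>i\<in>I. U i)" using cov by (simp add: fin_open_cover_def)
  have "X \<subseteq> \<Union>(Op ` I)" using XU Op by blast
  then obtain e where e: "0 < e" and leb: "\<And>x. x \<in> X \<Longrightarrow> \<exists>G\<in>Op ` I. ball x e \<subseteq> G"
    using Heine_Borel_lemma[OF assms(1)] Op by (metis imageE)
  show ?thesis
  proof (intro exI[of _ e] conjI allI impI e)
    fix f :: "'a \<Rightarrow> 'b"
    assume fa: "continuous_on X f \<and> f ` X \<subseteq> Y \<and> eps_mapping e X f"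
    then have fc: "continuous_on X f" and fY: "f ` X \<subseteq> Y" and fe: "eps_mapping e X f" by auto
    obtain \<eta> where eta: "0 < \<eta>" and etaP: "\<And>x x'. x \<in> X \<Longrightarrow> x' \<in> X \<Longrightarrow> dist (f x) (f x') < \<eta> \<Longrightarrow> dist x x' < e"
    proof -
      define C where "C = (X \<times> X) \<inter> {p. e \<le> dist (fst p) (snd p)}"
      show ?thesis
      proof (cases "C = {}")
        case True
        show ?thesis
          by (rule that[of 1]) (use True in \<open>auto simp: C_def\<close>)
      next
        case False
        have cC: "compact C" unfolding C_def
          by (intro compact_Int_closed compact_Times assms(1) closed_Collect_le continuous_intros)
        have gc: "continuous_on C (\<lambda>p. dist (f (fst p)) (f (snd p)))"
        proof -
          have "fst ` C \<subseteq> X" "snd ` C \<subseteq> X" by (auto simp: C_def)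
          then have "continuous_on C (\<lambda>p. f (fst p))" "continuous_on C (\<lambda>p. f (snd p))"
            by (auto intro!: continuous_on_compose2[OF fc] continuous_intros)
          then show ?thesis by (intro continuous_intros)
        qed
        obtain p0 where p0: "p0 \<in> C" and pmin: "\<And>q. q \<in> C \<Longrightarrow> dist (f (fst p0)) (f (snd p0)) \<le> dist (f (fst q)) (f (snd q))"
          using continuous_attains_inf[OF cC False gc] by blast
        have pos: "0 < dist (f (fst p0)) (f (snd p0))"
        proof (rule ccontr)
          assume "\<not> ?thesis"
          then have eq: "f (fst p0) = f (snd p0)" by simp
          have inX: "fst p0 \<in> X" "snd p0 \<in> X" and ge: "e \<le> dist (fst p0) (snd p0)" using p0 by (auto simp: C_def)
          let ?F = "f -` {f (fst p0)} \<inter> X"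
          have "bounded ?F" using compact_imp_bounded[OF assms(1)] by (rule bounded_subset) auto
          then have "dist (fst p0) (snd p0) \<le> diameter ?F"
            using inX eq by (intro diameter_bounded_bound) auto
          moreover have "diameter ?F < e" using fe inX by (auto simp: eps_mapping_def)
          ultimately show False using ge by simp
        qed
        show ?thesis
        proof (rule that[OF pos])
          fix x x' assume "x \<in> X" "x' \<in> X" "dist (f x) (f x') < dist (f (fst p0)) (f (snd p0))"
          then show "dist x x' < e" using pmin[of "(x, x')"] by (force simp: C_def)
        qed
      qed
    qed
    obtain D where D: "D \<subseteq> Y" "finite D" "Y \<subseteq> (\<Union>y\<in>D. ball y (\<eta>/2))"
    proof -
      have cv: "Y \<subseteq> (\<Union>y\<in>Y. ball y (\<eta>/2))" using eta by auto
      show ?thesis by (rule compactE_image[OF assms(2) open_ball cv]) (rule that)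
    qed
    obtain ys where ys: "set ys = D" using D(2) finite_list by blast
    define IV where "IV = {..<length ys}"
    define V where "V = (\<lambda>i. Y \<inter> ball (ys ! i) (\<eta>/2))"
    have covV: "fin_open_cover Y IV V"
      unfolding fin_open_cover_def
    proof (intro conjI ballI)
      show "finite IV" by (simp add: IV_def)
      show "openin (top_of_set Y) (V i)" for i by (simp add: V_def openin_open_Int)
      show "(\<Union>i\<in>IV. V i) = Y"
      proof
        show "(\<Union>i\<in>IV. V i) \<subseteq> Y" by (auto simp: V_def)
        show "Y \<subseteq> (\<Union>i\<in>IV. V i)"
        proof
          fix y assume yY: "y \<in> Y"
          then obtain z where z: "z \<in> set ys" "y \<in> ball z (\<eta>/2)" using D(3) ys by auto
          then obtain i where "i < length ys" "ys ! i = z" by (auto simp: in_set_conv_nth)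
          then show "y \<in> (\<Union>i\<in>IV. V i)" using yY z by (auto simp: V_def IV_def)
        qed
      qed
    qed
    obtain J W lam where covW: "fin_open_cover Y J W" and refW: "refinement_map J W IV V lam"
      and ord: "\<And>y. y \<in> Y \<Longrightarrow> card {j\<in>J. y \<in> W j} \<le> Suc n"
      using assms(5) covV unfolding covdim_eq_def covdim_le_def by blast
    define P where "P = (\<lambda>j. f -` W j \<inter> X)"
    have Pex: "\<exists>i. i \<in> I \<and> P j \<subseteq> U i" if j: "j \<in> J" for j
    proof (cases "P j = {}")
      case True then show ?thesis using Ine by auto
    next
      case False
      then obtain x0 where x0: "x0 \<in> P j" by auto
      then have x0X: "x0 \<in> X" by (simp add: P_def)
      obtain i where i: "i \<in> I" "ball x0 e \<subseteq> Op i" using leb[OF x0X] by auto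
      have WV: "W j \<subseteq> V (lam j)" using refW j by (simp add: refinement_map_def)
      have "P j \<subseteq> U i"
      proof
        fix x assume x: "x \<in> P j"
        have "f x \<in> V (lam j)" "f x0 \<in> V (lam j)" using x x0 WV by (auto simp: P_def)
        then have "dist (f x0) (f x) < \<eta>"
          unfolding V_def using dist_triangle_half_r[of "ys ! lam j" "f x0" \<eta> "f x"] by (auto simp: dist_commute)
        then have "dist x0 x < e" using etaP x x0X by (auto simp: P_def)
        then show "x \<in> U i" using i Op x by (auto simp: P_def)
      qed
      then show ?thesis using i by blast
    qed
    define \<kappa> where "\<kappa> = (\<lambda>j. SOME i. i \<in> I \<and> P j \<subseteq> U i)"
    have \<kappa>: "\<kappa> j \<in> I" "P j \<subseteq> U (\<kappa> j)" if "j \<in> J" for j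
      using someI_ex[OF Pex[OF that]] by (auto simp: \<kappa>_def)
    define c where "c = (\<lambda>\<sigma>. Alt c0 (map \<kappa> \<sigma>))"
    have cb: "cobdry c \<sigma> = Alt (cobdry c0) (map \<kappa> \<sigma>)" for \<sigma>
      unfolding c_def using cobdry_map[of "Alt c0" \<kappa> \<sigma>] by (simp add: Alt_cobdry)
    have WY: "W j \<subseteq> Y" if "j \<in> J" for j
      using covW that by (auto simp: fin_open_cover_def dest: openin_subset)
    have cocY: "is_cocycle J W n c"
      unfolding is_cocycle_def
    proof (intro allI impI)
      fix \<sigma> assume "nerve_simplex J W (Suc n) \<sigma>"
      then have len: "length \<sigma> = Suc (Suc n)" and sJ: "set \<sigma> \<subseteq> J" and ne: "(\<Inter>j\<in>set \<sigma>. W j) \<noteq> {}"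
        by (auto simp: nerve_simplex_def)
      obtain y where y: "y \<in> (\<Inter>j\<in>set \<sigma>. W j)" using ne by auto
      have "\<sigma> \<noteq> []" using len by auto
      then obtain j0 where "j0 \<in> set \<sigma>" by (cases \<sigma>) auto
      then have yY: "y \<in> Y" using y WY sJ by blast
      have fJ: "finite J" using covW by (simp add: fin_open_cover_def)
      have "set \<sigma> \<subseteq> {j\<in>J. y \<in> W j}" using y sJ by auto
      then have "card (set \<sigma>) \<le> Suc n"
        using ord[OF yY] card_mono[of "{j\<in>J. y \<in> W j}" "set \<sigma>"] fJ by force
      then have "\<not> distinct \<sigma>" using len distinct_card by fastforce
      then have "\<not> distinct (map \<kappa> \<sigma>)" using distinct_map by blast
      then show "cobdry c \<sigma> = 0" by (simp add: cb Alt_def)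
    qed
    have covP: "fin_open_cover X J P"
      unfolding fin_open_cover_def
    proof (intro conjI ballI)
      show "finite J" using covW by (simp add: fin_open_cover_def)
      show "openin (top_of_set X) (P j)" if "j \<in> J" for j
      proof -
        have "openin (top_of_set Y) (W j)" using covW that by (simp add: fin_open_cover_def)
        then obtain T where T: "open T" "W j = Y \<inter> T" by (auto simp: openin_open)
        have "P j = X \<inter> f -` T" using T fY by (auto simp: P_def)
        then show ?thesis using continuous_openin_preimage_gen[OF fc T(1)] by simp
      qed
      show "(\<Union>j\<in>J. P j) = X"
        using covW fY unfolding fin_open_cover_def P_def by blast
    qed
    have Sclosed: "\<And>s t. set s \<subseteq> I \<and> (\<Inter>i\<in>set s. U i) \<noteq> {} \<Longrightarrow> t \<noteq> [] \<Longrightarrow> set t \<subseteq> set s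
        \<Longrightarrow> set t \<subseteq> I \<and> (\<Inter>i\<in>set t. U i) \<noteq> {}"
      by (rule nerve_closed)
    have coc0': "\<And>t. set t \<subseteq> I \<and> (\<Inter>i\<in>set t. U i) \<noteq> {} \<Longrightarrow> length t = Suc (Suc n) \<Longrightarrow> cobdry c0 t = 0"
      using coc0 by (auto simp: is_cocycle_def nerve_simplex_def)
    have cocP: "is_cocycle J P n c"
      unfolding is_cocycle_def
    proof (intro allI impI)
      fix \<sigma> assume "nerve_simplex J P (Suc n) \<sigma>"
      then have len: "length \<sigma> = Suc (Suc n)" and sJ: "set \<sigma> \<subseteq> J" and ne: "(\<Inter>j\<in>set \<sigma>. P j) \<noteq> {}"
        by (auto simp: nerve_simplex_def)
      have "set (map \<kappa> \<sigma>) \<subseteq> I" using sJ \<kappa> by auto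
      moreover have "(\<Inter>i\<in>set (map \<kappa> \<sigma>). U i) \<noteq> {}"
        using ne sJ \<kappa> by fastforce
      ultimately have "cobdry c0 (sort (map \<kappa> \<sigma>)) = 0"
        using len by (intro coc0') auto
      then show "cobdry c \<sigma> = 0" by (simp add: cb Alt_def)
    qed
    have nzP: "\<not> is_coboundary K Z n (\<lambda>\<sigma>. c (map \<nu> \<sigma>))"
      if KZ: "fin_open_cover X K Z" "refinement_map K Z J P \<nu>" for K Z \<nu>
    proof
      assume "is_coboundary K Z n (\<lambda>\<sigma>. c (map \<nu> \<sigma>))"
      then obtain b where b: "\<And>\<sigma>. nerve_simplex K Z n \<sigma> \<Longrightarrow> cobdry b \<sigma> = c (map \<nu> \<sigma>)"
        using n0 by (auto simp: is_coboundary_def)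
      define \<theta> where "\<theta> = (\<lambda>k. \<kappa> (\<nu> k))"
      have ref\<theta>: "refinement_map K Z I U \<theta>"
        using KZ(2) \<kappa> unfolding refinement_map_def \<theta>_def by blast
      have "is_coboundary K Z n (\<lambda>\<sigma>. c0 (map \<theta> \<sigma>))"
        unfolding is_coboundary_def using n0
      proof (simp, intro exI[of _ "\<lambda>\<sigma>. b \<sigma> + H c0 (map \<theta> \<sigma>)"] allI impI)
        fix \<sigma> assume ns: "nerve_simplex K Z n \<sigma>"
        then have len: "length \<sigma> = Suc n" and sK: "set \<sigma> \<subseteq> K" and ne: "(\<Inter>k\<in>set \<sigma>. Z k) \<noteq> {}"
          by (auto simp: nerve_simplex_def)
        have S: "set (map \<theta> \<sigma>) \<subseteq> I \<and> (\<Inter>i\<in>set (map \<theta> \<sigma>). U i) \<noteq> {}"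
          using ref\<theta> sK ne unfolding refinement_map_def by fastforce
        have h: "c0 (map \<theta> \<sigma>) - Alt c0 (map \<theta> \<sigma>) = cobdry (H c0) (map \<theta> \<sigma>)"
          by (rule homotopy_closed[where S = "\<lambda>t. set t \<subseteq> I \<and> (\<Inter>i\<in>set t. U i) \<noteq> {}", OF Sclosed coc0' S]) (use len in auto)
        have "cobdry (\<lambda>\<sigma>. b \<sigma> + H c0 (map \<theta> \<sigma>)) \<sigma> = cobdry b \<sigma> + cobdry (H c0) (map \<theta> \<sigma>)"
          by (simp add: cobdry_add cobdry_map[of "H c0"])
        also have "\<dots> = Alt c0 (map \<theta> \<sigma>) + cobdry (H c0) (map \<theta> \<sigma>)"
          using b[OF ns] by (simp add: c_def \<theta>_def comp_def)
        also have "\<dots> = c0 (map \<theta> \<sigma>)" using h by simp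
        finally show "cobdry (\<lambda>\<sigma>. b \<sigma> + H c0 (map \<theta> \<sigma>)) \<sigma> = c0 (map \<theta> \<sigma>)" .
      qed
      then show False using nz[OF KZ(1) ref\<theta>] by blast
    qed
    have "cech_nonzero_class X J (\<lambda>i. f -` W i \<inter> X) n c"
      unfolding cech_nonzero_class_def P_def[symmetric] using covP cocP nzP by blast
    then show "cech_induced_nonzero X Y f n"
      unfolding cech_induced_nonzero_def using covW cocY by blast
  qed
qed

end
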